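(* Let $\omega_N=(\alpha^{+,(N)},\alpha^{-,(N)},\gamma_1^{(N)},\delta^{(N)})\in\hat\Omega$ and $\omega=(\alpha^+,\alpha^-,\gamma_1,\delta)\in\hat\Omega$, and suppose $\omega_N\to\omega$ coordinate-wise as $N\to\infty$. Then $$\sum_{i\ge1}\left|\alpha_i^{+,(N)}-\alpha_i^+\right|^3\xrightarrow[N\to\infty]{}0,\qquad \sum_{i\ge1}\left|\alpha_i^{-,(N)}-\alpha_i^-\right|^3\xrightarrow[N\to\infty]{}0.$$
   Context: $\hat\Omega$ is the set of $(\alpha^+,\alpha^-,\gamma_1,\delta)$ with $\alpha^\pm=(\alpha_1^\pm\ge\alpha_2^\pm\ge\dots\ge0)$ non-increasing sequences of non-negative reals, $\gamma_1\in\mathbb{R}$, $\delta\ge0$, and $\sum_i(\alpha_i^+)^2+\sum_i(\alpha_i^-)^2\le\delta$. Coordinate-wise convergence means convergence of each $\alpha_i^\pm$, of $\gamma_1$ and of $\delta$. *)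

theory Defs
  imports "HOL-Analysis.Analysis"
begin

text \<open>Elements of Omega-hat. Sequences alpha_1, alpha_2, ... are represented as
  functions nat => real with index i+1 stored at position i.\<close>

definition Omega_hat :: "(nat \<Rightarrow> real) \<Rightarrow> (nat \<Rightarrow> real) \<Rightarrow> real \<Rightarrow> real \<Rightarrow> bool" where
  "Omega_hat ap am g d \<longleftrightarrow>
     (\<forall>i. ap i \<ge> 0) \<and> decseq ap \<and> (\<forall>i. am i \<ge> 0) \<and> decseq am \<and> d \<ge> 0 \<and>
     summable (\<lambda>i. (ap i)\<^sup>2) \<and> summable (\<lambda>i. (am i)\<^sup>2) \<and>
     (\<Sum>i. (ap i)\<^sup>2) + (\<Sum>i. (am i)\<^sup>2) \<le> d"

end

theory Submission
  imports Defs
begin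

lemma cube_diff_le:
  fixes x y :: real assumes "x \<ge> 0" "y \<ge> 0"
  shows "\<bar>x - y\<bar> ^ 3 \<le> x ^ 3 + y ^ 3"
proof -
  have "\<bar>x - y\<bar> \<le> max x y" using assms by auto
  hence "\<bar>x - y\<bar> ^ 3 \<le> (max x y) ^ 3" by (intro power_mono) auto
  also have "\<dots> \<le> x ^ 3 + y ^ 3" using assms by (auto simp: max_def)
  finally show ?thesis .
qed

lemma dec_bound:
  fixes a :: "nat \<Rightarrow> real"
  assumes "\<forall>i. a i \<ge> 0" "decseq a" "summable (\<lambda>i. (a i)\<^sup>2)" "(\<Sum>i. (a i)\<^sup>2) \<le> B"
  shows "real (M+1) * (a M)\<^sup>2 \<le> B"
proof -
  have "real (M+1) * (a M)\<^sup>2 = (\<Sum>i<M+1. (a M)\<^sup>2)" by simp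
  also have "\<dots> \<le> (\<Sum>i<M+1. (a i)\<^sup>2)"
  proof (rule sum_mono)
    fix i assume "i \<in> {..<M+1}"
    hence "a M \<le> a i" using assms(2) by (auto simp: decseq_def)
    thus "(a M)\<^sup>2 \<le> (a i)\<^sup>2" using assms(1) by (intro power_mono) auto
  qed
  also have "\<dots> \<le> (\<Sum>i. (a i)\<^sup>2)" using assms(3) by (intro sum_le_suminf) auto
  finally show ?thesis using assms(4) by linarith
qed

lemma cube_le:
  fixes a :: "nat \<Rightarrow> real"
  assumes "\<forall>i. a i \<ge> 0" "decseq a" "M \<le> i"
  shows "(a i) ^ 3 \<le> a M * (a i)\<^sup>2"
proof -
  have "a i \<le> a M" using assms(2,3) by (auto simp: decseq_def)
  hence "a i * (a i)\<^sup>2 \<le> a M * (a i)\<^sup>2" by (intro mult_right_mono) auto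
  thus ?thesis by (simp add: power3_eq_cube power2_eq_square)
qed

lemma main:
  fixes a :: "nat \<Rightarrow> nat \<Rightarrow> real" and b :: "nat \<Rightarrow> real" and B :: real
  assumes a0: "\<forall>N i. a N i \<ge> 0" and ad: "\<forall>N. decseq (a N)"
    and as: "\<forall>N. summable (\<lambda>i. (a N i)\<^sup>2)" and aB: "\<forall>N. (\<Sum>i. (a N i)\<^sup>2) \<le> B"
    and b0: "\<forall>i. b i \<ge> 0" and bd: "decseq b"
    and bs: "summable (\<lambda>i. (b i)\<^sup>2)" and bB: "(\<Sum>i. (b i)\<^sup>2) \<le> B"
    and lim: "\<And>i. (\<lambda>N. a N i) \<longlonglongrightarrow> b i"
  shows "(\<forall>N. summable (\<lambda>i. \<bar>a N i - b i\<bar> ^ 3)) \<and> (\<lambda>N. \<Sum>i. \<bar>a N i - b i\<bar> ^ 3) \<longlonglongrightarrow> 0"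
proof -
  have B0: "B \<ge> 0" using bB suminf_nonneg[OF bs] by (meson order_trans zero_le_power2)
  define f where "f N i = \<bar>a N i - b i\<bar> ^ 3" for N i
  define g where "g M N i = a N M * (a N i)\<^sup>2 + b M * (b i)\<^sup>2" for M N i
  have gs: "summable (g M N)" for M N
    unfolding g_def using as bs by (intro summable_add summable_mult) auto
  have sumg: "(\<Sum>i. g M N i) \<le> (a N M + b M) * B" for M N
  proof -
    have "(\<Sum>i. g M N i) = a N M * (\<Sum>i. (a N i)\<^sup>2) + b M * (\<Sum>i. (b i)\<^sup>2)"
      unfolding g_def using as bs
      by (simp add: suminf_add[symmetric] suminf_mult summable_mult)
    also have "\<dots> \<le> a N M * B + b M * B"
      using aB bB a0 b0 by (intro add_mono mult_left_mono) auto
    finally show ?thesis by (simp add: algebra_simps)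
  qed
  have fg: "f N i \<le> g M N i" if "M \<le> i" for M N i
  proof -
    have "f N i \<le> (a N i)^3 + (b i)^3" unfolding f_def using a0 b0 by (intro cube_diff_le) auto
    also have "\<dots> \<le> g M N i" unfolding g_def
      using cube_le[of "a N" M i] cube_le[of b M i] a0 ad b0 bd that by (intro add_mono) auto
    finally show ?thesis .
  qed
  have f0: "f N i \<ge> 0" for N i unfolding f_def by simp
  define h where "h M N i = (if i \<in> {..<M} then f N i else 0) + g M N i" for M N i
  have hs: "h M N sums ((\<Sum>i\<in>{..<M}. f N i) + (\<Sum>i. g M N i))" for M N
    unfolding h_def by (intro sums_add sums_If_finite_set summable_sums gs) auto
  have fh: "f N i \<le> h M N i" for M N i
  proof (cases "i < M")
    case True
    have "g M N i \<ge> 0" unfolding g_def using a0 b0 by auto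
    then show ?thesis using True unfolding h_def by auto
  next
    case False then show ?thesis using fg[of M i N] unfolding h_def by auto
  qed
  have fs: "summable (f N)" for N
  proof (rule summable_comparison_test'[where g="h 0 N" and N=0])
    show "summable (h 0 N)" using hs[of 0 N] by (simp add: sums_iff)
    fix n :: nat show "norm (f N n) \<le> h 0 N n" using fh[of N n 0] f0[of N n] by simp
  qed
  have fbound: "(\<Sum>i. f N i) \<le> (\<Sum>i\<in>{..<M}. f N i) + (a N M + b M) * B" for N M
  proof -
    have "(\<Sum>i. f N i) \<le> (\<Sum>i. h M N i)" using fs hs fh by (intro suminf_le) (auto simp: sums_iff)
    also have "\<dots> = (\<Sum>i\<in>{..<M}. f N i) + (\<Sum>i. g M N i)" using hs by (simp add: sums_iff)
    also have "\<dots> \<le> (\<Sum>i\<in>{..<M}. f N i) + (a N M + b M) * B" using sumg by simp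
    finally show ?thesis .
  qed
  have small: "x < c" if "\<forall>i. x' i \<ge> 0" "decseq x'" "summable (\<lambda>i. (x' i)\<^sup>2)"
     "(\<Sum>i. (x' i)\<^sup>2) \<le> B" "c > 0" "B / real (M+1) < c\<^sup>2" "x = x' M" for x' x c M
  proof -
    have "real (M+1) * (x' M)\<^sup>2 \<le> B" using dec_bound[OF that(1-4)] .
    hence "(x' M)\<^sup>2 \<le> B / real (M+1)" by (simp add: field_simps)
    hence "(x' M)\<^sup>2 < c\<^sup>2" using that(6) by linarith
    hence "x' M < c" using that(5) power2_less_imp_less[of "x' M" c] by linarith
    thus ?thesis using that(7) by simp
  qed
  have "(\<lambda>N. \<Sum>i. f N i) \<longlonglongrightarrow> 0"
  proof (rule LIMSEQ_I)
    fix e :: real assume e: "e > 0"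
    define c where "c = e / (4 * (B + 1))"
    have c0: "c > 0" using e B0 by (simp add: c_def)
    obtain M :: nat where M: "real M > B / c\<^sup>2" using reals_Archimedean2 by blast
    have MB: "B / real (M+1) < c\<^sup>2"
    proof -
      have "B < c\<^sup>2 * real M" using M c0 by (simp add: field_simps)
      also have "\<dots> \<le> c\<^sup>2 * real (M+1)" using c0 by (intro mult_left_mono) auto
      finally show ?thesis by (simp add: field_simps)
    qed
    have aM: "a N M < c" for N using small[of "a N" c M "a N M"] a0 ad as aB c0 MB by auto
    have bM: "b M < c" using small[of b c M "b M"] b0 bd bs bB c0 MB by auto
    have tail: "(a N M + b M) * B \<le> e / 2" for N
    proof -
      have "(a N M + b M) * B \<le> (2 * c) * B" using aM[of N] bM B0 by (intro mult_right_mono) auto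
      also have "\<dots> \<le> e / 2" using B0 e by (simp add: c_def field_simps)
      finally show ?thesis .
    qed
    have "(\<lambda>N. \<Sum>i\<in>{..<M}. f N i) \<longlonglongrightarrow> (\<Sum>i\<in>{..<M}. \<bar>b i - b i\<bar> ^ 3)"
      unfolding f_def by (intro tendsto_intros lim)
    hence "(\<lambda>N. \<Sum>i\<in>{..<M}. f N i) \<longlonglongrightarrow> 0" by simp
    then obtain N0 where N0: "\<forall>N\<ge>N0. norm ((\<Sum>i\<in>{..<M}. f N i) - 0) < e / 2"
      using LIMSEQ_D[of _ 0 "e/2"] e by (metis half_gt_zero)
    show "\<exists>no. \<forall>n\<ge>no. norm ((\<Sum>i. f n i) - 0) < e"
    proof (intro exI allI impI)
      fix N assume "N \<ge> N0"
      hence p: "(\<Sum>i\<in>{..<M}. f N i) < e / 2" using N0 by auto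
      have nn: "(\<Sum>i. f N i) \<ge> 0" using fs f0 by (intro suminf_nonneg) auto
      show "norm ((\<Sum>i. f N i) - 0) < e" using fbound[of N M] tail[of N] p nn by simp
    qed
  qed
  thus ?thesis using fs unfolding f_def by auto
qed

theorem lemma5p3:
  fixes apN amN :: "nat \<Rightarrow> nat \<Rightarrow> real" and gN dN :: "nat \<Rightarrow> real"
    and ap am :: "nat \<Rightarrow> real" and g d :: real
  assumes "\<And>N. Omega_hat (apN N) (amN N) (gN N) (dN N)"
    and "Omega_hat ap am g d"
    and "\<And>i. (\<lambda>N. apN N i) \<longlonglongrightarrow> ap i"
    and "\<And>i. (\<lambda>N. amN N i) \<longlonglongrightarrow> am i"
    and "gN \<longlonglongrightarrow> g"
    and "dN \<longlonglongrightarrow> d"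
  shows "(\<forall>N. summable (\<lambda>i. \<bar>apN N i - ap i\<bar> ^ 3)) \<and>
         (\<forall>N. summable (\<lambda>i. \<bar>amN N i - am i\<bar> ^ 3)) \<and>
         (\<lambda>N. \<Sum>i. \<bar>apN N i - ap i\<bar> ^ 3) \<longlonglongrightarrow> 0 \<and>
         (\<lambda>N. \<Sum>i. \<bar>amN N i - am i\<bar> ^ 3) \<longlonglongrightarrow> 0"
proof -
  obtain K where K: "\<And>N. norm (dN N) \<le> K"
  proof -
    have "Bseq dN" using assms(6) by (intro convergent_imp_Bseq) (auto simp: convergent_def)
    then obtain K where "\<forall>N. norm (dN N) \<le> K" by (meson BseqE)
    thus ?thesis using that by blast
  qed
  define B where "B = max K d"
  have dB: "dN N \<le> B" for N using K[of N] by (auto simp: B_def)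
  have H: "\<forall>i. a i \<ge> 0 \<and> decseq a \<and> summable (\<lambda>i. (a i)\<^sup>2) \<and> (\<Sum>i. (a i)\<^sup>2) \<le> D \<and>
           (\<forall>i. a' i \<ge> 0) \<and> decseq a' \<and> summable (\<lambda>i. (a' i)\<^sup>2) \<and> (\<Sum>i. (a' i)\<^sup>2) \<le> D"
    if "Omega_hat a a' gg D" for a a' gg D
  proof -
    have "(\<Sum>i. (a i)\<^sup>2) \<ge> 0" "(\<Sum>i. (a' i)\<^sup>2) \<ge> 0"
      using that unfolding Omega_hat_def by (auto intro: suminf_nonneg)
    thus ?thesis using that unfolding Omega_hat_def by auto
  qed
  note H1 = H[OF assms(1)] and H2 = H[OF assms(2)]
  have P: "(\<forall>N. summable (\<lambda>i. \<bar>apN N i - ap i\<bar> ^ 3)) \<and> (\<lambda>N. \<Sum>i. \<bar>apN N i - ap i\<bar> ^ 3) \<longlonglongrightarrow> 0"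
  proof (rule main[where B = B])
    show "\<forall>N. (\<Sum>i. (apN N i)\<^sup>2) \<le> B" using H1 dB by (meson order_trans)
    show "(\<Sum>i. (ap i)\<^sup>2) \<le> B" using H2 by (auto simp: B_def)
    show "\<forall>N i. 0 \<le> apN N i" using H1 by blast
    show "\<forall>N. decseq (apN N)" using H1 by blast
    show "\<forall>N. summable (\<lambda>i. (apN N i)\<^sup>2)" using H1 by blast
    show "\<forall>i. 0 \<le> ap i" using H2 by blast
    show "decseq ap" using H2 by blast
    show "summable (\<lambda>i. (ap i)\<^sup>2)" using H2 by blast
    show "\<And>i. (\<lambda>N. apN N i) \<longlonglongrightarrow> ap i" by (rule assms(3))
  qed
  have M: "(\<forall>N. summable (\<lambda>i. \<bar>amN N i - am i\<bar> ^ 3)) \<and> (\<lambda>N. \<Sum>i. \<bar>amN N i - am i\<bar> ^ 3) \<longlonglongrightarrow> 0"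
  proof (rule main[where B = B])
    show "\<forall>N. (\<Sum>i. (amN N i)\<^sup>2) \<le> B" using H1 dB by (meson order_trans)
    show "(\<Sum>i. (am i)\<^sup>2) \<le> B" using H2 by (auto simp: B_def)
    show "\<forall>N i. 0 \<le> amN N i" using H1 by blast
    show "\<forall>N. decseq (amN N)" using H1 by blast
    show "\<forall>N. summable (\<lambda>i. (amN N i)\<^sup>2)" using H1 by blast
    show "\<forall>i. 0 \<le> am i" using H2 by blast
    show "decseq am" using H2 by blast
    show "summable (\<lambda>i. (am i)\<^sup>2)" using H2 by blast
    show "\<And>i. (\<lambda>N. amN N i) \<longlonglongrightarrow> am i" by (rule assms(4))
  qed
  show ?thesis using P M by auto
qed

end
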